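(* Let $1\le k\le n$. For every state $q\in S_k$, there is a wait-free implementation of a consensus object for $k$ processes from one token object $T_q$ (the ERC20 token object initialized in state $q$) together with atomic read/write registers. Consequently $\mathcal{CN}(T_{S_k})\ge k$.
   Context: Asynchronous shared-memory model with crash failures; processes are sequential and communicate through shared objects; an implementation is wait-free if every operation invoked by a correct process terminates regardless of crashes of other processes. A consensus object offers a single-shot operation $\mathrm{propose}(v)$ returning a decided value; it must satisfy termination (wait-freedom), validity (the decided value was proposed by some process) and agreement (all processes decide the same value). The consensus number $\mathcal{CN}(O)$ of an object type $O$ is the largest $m$ such that consensus among $m$ processes can be wait-free implemented from atomic registers and objects of type $O$ (infinite if there is no largest). For a set of states $Q'$, $T_{Q'}$ denotes the token object initialized in some state of $Q'$; $\mathcal{CN}(T_{Q'})\ge k$ means that from any such initial state consensus among $k$ processes can be implemented. ERC20 token object. There are $n$ processes $\Pi=\{p_1,\dots,p_n\}$ and $n$ accounts $\mathcal A=\{a_1,\dots,a_n\}$, with owner bijection $\omega(a_i)=p_i$; $a_p$ denotes the account owned by $p$. States are pairs $q=(\beta,\alpha)$ with balances $\beta:\mathcal A\to\mathbb N$ and allowances $\alpha:\mathcal A\times\Pi\to\mathbb N$. Operations invoked by process $p$ (sequential specification): $\mathrm{transfer}(a_d,v)$: if $\beta(a_p)\ge v$, move $v$ from $a_p$ to $a_d$ and return true, else leave the state unchanged and return false; $\mathrm{approve}(\bar p,v)$: set $\alpha(a_p,\bar p)=v$ (all else unchanged), return true; $\mathrm{transferFrom}(a_s,a_d,v)$: if $\beta(a_s)\ge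 v$ and $\alpha(a_s,p)\ge v$, decrease $\beta(a_s)$ and $\alpha(a_s,p)$ by $v$, increase $\beta(a_d)$ by $v$, return true, else leave the state unchanged and return false; $\mathrm{balanceOf}(a)$ returns $\beta(a)$; $\mathrm{totalSupply}$ returns $\sum_a\beta(a)$; $\mathrm{allowances}(a,\bar p)$ returns $\alpha(a,\bar p)$ (read-only). $T_q$ is this object initialized in state $q$. Enabled spenders: for $q=(\beta,\alpha)$ and $a\in\mathcal A$, $\sigma_q(a)=\{p\in\Pi: p=\omega(a)\ \lor\ \alpha(a,p)>0\}$, with the convention that if $\beta(a)=0$ then $\sigma_q(a)=\{\omega(a)\}$. Predicate $\mathrm{UT}(a,q)$ holds iff $\beta(a)>0$ and (either $|\sigma_q(a)|\le 2$, or for all $p_i,p_j\in\sigma_q(a)\setminus\{\omega(a)\}$: $\alpha(a,p_i)+\alpha(a,p_j)>\beta(a)$). The set of $k$-synchronization states is $S_k=\{q: \exists a\in\mathcal A,\ |\sigma_q(a)|=k \land \mathrm{UT}(a,q)\}$. *)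

theory Defs
  imports Main
begin

text \<open>Processes are p_0..p_(n-1) (naturals below n), accounts a_0..a_(n-1)
  (naturals below n), and the owner of account a_i is process p_i, i.e. the
  owner bijection is the identity on indices.  A token state is a pair
  (beta, alpha) of balances beta a and allowances alpha a p.
  Values of beta/alpha outside the index range are irrelevant.\<close>

type_synonym tstate = "(nat \<Rightarrow> nat) \<times> (nat \<Rightarrow> nat \<Rightarrow> nat)"

definition bal :: "tstate \<Rightarrow> nat \<Rightarrow> nat" where "bal q = fst q"
definition allw :: "tstate \<Rightarrow> nat \<Rightarrow> nat \<Rightarrow> nat" where "allw q = snd q"

definition sigma :: "nat \<Rightarrow> tstate \<Rightarrow> nat \<Rightarrow> nat set" where
  "sigma n q a = (if bal q a = 0 then {a}
                  else {p. p < n \<and> (p = a \<or> allw q a p > 0)})"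

definition UT :: "nat \<Rightarrow> nat \<Rightarrow> tstate \<Rightarrow> bool" where
  "UT n a q \<longleftrightarrow> bal q a > 0 \<and>
     (card (sigma n q a) \<le> 2 \<or>
      (\<forall>pi \<in> sigma n q a - {a}. \<forall>pj \<in> sigma n q a - {a}.
          pi \<noteq> pj \<longrightarrow> allw q a pi + allw q a pj > bal q a))"

definition S :: "nat \<Rightarrow> nat \<Rightarrow> tstate set" where
  "S n k = {q. \<exists>a<n. card (sigma n q a) = k \<and> UT n a q}"

datatype 'v op =
    Transfer nat nat            \<comment> \<open>transfer(a_d, v)\<close>
  | Approve nat nat             \<comment> \<open>approve(p, v)\<close>
  | TransferFrom nat nat nat    \<comment> \<open>transferFrom(a_s, a_d, v)\<close>
  | BalanceOf nat
  | TotalSupply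
  | Allowance nat nat           \<comment> \<open>allowances(a, p)\<close>
  | RegRead nat
  | RegWrite nat "'v option"

datatype 'v resp = RBool bool | RNat nat | RVal "'v option" | RAck

datatype 'v action = Invoke "'v op" | Decide 'v

type_synonym 'v regs = "nat \<Rightarrow> 'v option"

text \<open>Atomic effect of an operation invoked by process p (sequential specification).
  Arguments outside the index range are treated as failing no-ops.\<close>
fun apply_op :: "nat \<Rightarrow> nat \<Rightarrow> 'v op \<Rightarrow> tstate \<times> 'v regs \<Rightarrow> (tstate \<times> 'v regs) \<times> 'v resp" where
  "apply_op n p (Transfer d v) ((b, al), R) =
     (if d < n \<and> v \<le> b p then
        (let b1 = b(p := b p - v) in (((b1(d := b1 d + v), al), R), RBool True))
      else (((b, al), R), RBool False))"
| "apply_op n p (Approve pb v) ((b, al), R) =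
     (if pb < n then (((b, al(p := (al p)(pb := v))), R), RBool True)
      else (((b, al), R), RBool False))"
| "apply_op n p (TransferFrom s d v) ((b, al), R) =
     (if s < n \<and> d < n \<and> v \<le> b s \<and> v \<le> al s p then
        (let b1 = b(s := b s - v) in
          (((b1(d := b1 d + v), al(s := (al s)(p := al s p - v))), R), RBool True))
      else (((b, al), R), RBool False))"
| "apply_op n p (BalanceOf a) ((b, al), R) =
     (((b, al), R), RNat (if a < n then b a else 0))"
| "apply_op n p TotalSupply ((b, al), R) =
     (((b, al), R), RNat (\<Sum>a<n. b a))"
| "apply_op n p (Allowance a pb) ((b, al), R) =
     (((b, al), R), RNat (if a < n \<and> pb < n then al a pb else 0))"
| "apply_op n p (RegRead i) (q, R) = ((q, R), RVal (R i))"
| "apply_op n p (RegWrite i x) (q, R) = ((q, R(i := x)), RAck)"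

text \<open>A (deterministic) algorithm: the next action of process p depends on its
  proposal and on the list of responses it has received so far (its local history).\<close>
type_synonym 'v prog = "nat \<Rightarrow> 'v \<Rightarrow> 'v resp list \<Rightarrow> 'v action"

type_synonym 'v config = "tstate \<times> 'v regs \<times> (nat \<Rightarrow> 'v resp list)"

fun step :: "nat \<Rightarrow> 'v prog \<Rightarrow> (nat \<Rightarrow> 'v) \<Rightarrow> nat \<Rightarrow> 'v config \<Rightarrow> 'v config" where
  "step n pr inp p (q, R, h) =
     (case pr p (inp p) (h p) of
        Decide v \<Rightarrow> (q, R, h)
      | Invoke oper \<Rightarrow> (case apply_op n p oper (q, R) of
                      ((q', R'), r) \<Rightarrow> (q', R', h(p := h p @ [r]))))"

text \<open>Execution from token state q0 (registers initially empty) under the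
  schedule s (s t is the process taking step t).\<close>
fun run :: "nat \<Rightarrow> 'v prog \<Rightarrow> tstate \<Rightarrow> (nat \<Rightarrow> 'v) \<Rightarrow> (nat \<Rightarrow> nat) \<Rightarrow> nat \<Rightarrow> 'v config" where
  "run n pr q0 inp s 0 = (q0, (\<lambda>_. None), (\<lambda>_. []))"
| "run n pr q0 inp s (Suc t) = step n pr inp (s t) (run n pr q0 inp s t)"

text \<open>Process p has (invoked propose and) decided v by time t.\<close>
definition decided :: "nat \<Rightarrow> 'v prog \<Rightarrow> tstate \<Rightarrow> (nat \<Rightarrow> 'v) \<Rightarrow> (nat \<Rightarrow> nat) \<Rightarrow> nat \<Rightarrow> nat \<Rightarrow> 'v \<Rightarrow> bool" where
  "decided n pr q0 inp s t p v \<longleftrightarrow>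
     (\<exists>t'<t. s t' = p) \<and>
     pr p (inp p) (snd (snd (run n pr q0 inp s t)) p) = Decide v"

text \<open>Every schedule is an
  infinite sequence of steps of processes in P; processes taking finitely many
  steps are the crashed ones.\<close>
definition consensus_impl :: "nat \<Rightarrow> tstate \<Rightarrow> nat set \<Rightarrow> 'v prog \<Rightarrow> bool" where
  "consensus_impl n q0 P pr \<longleftrightarrow>
    (\<forall>inp s. (\<forall>t. s t \<in> P) \<longrightarrow>
       \<comment> \<open>termination (wait-freedom): every correct process decides\<close>
       (\<forall>p\<in>P. (\<forall>m. \<exists>t\<ge>m. s t = p) \<longrightarrow> (\<exists>t v. decided n pr q0 inp s t p v))
     \<and> \<comment> \<open>validity\<close>
       (\<forall>t p v. decided n pr q0 inp s t p v \<longrightarrow>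
           (\<exists>p'\<in>P. (\<exists>t'<t. s t' = p') \<and> v = inp p'))
     \<and> \<comment> \<open>agreement\<close>
       (\<forall>t p1 p2 v1 v2. decided n pr q0 inp s t p1 v1 \<and> decided n pr q0 inp s t p2 v2
           \<longrightarrow> v1 = v2))"

definition consensus_implementable :: "'v itself \<Rightarrow> nat \<Rightarrow> tstate \<Rightarrow> nat \<Rightarrow> bool" where
  "consensus_implementable _ n q k \<longleftrightarrow>
     (\<exists>P (pr :: 'v prog). P \<subseteq> {..<n} \<and> card P = k \<and> consensus_impl n q P pr)"

definition CN_ge :: "'v itself \<Rightarrow> nat \<Rightarrow> tstate set \<Rightarrow> nat \<Rightarrow> bool" where
  "CN_ge vt n Q k \<longleftrightarrow> (\<forall>q\<in>Q. consensus_implementable vt n q k)"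

end

theory Submission
  imports Defs
begin

section \<open>Generic facts about runs\<close>

lemma step_other:
  "p' \<noteq> p \<Longrightarrow> snd (snd (step n pr inp p' c)) p = snd (snd c) p"
  by (cases c) (auto split: action.split prod.split)

lemma step_dec:
  "pr p (inp p) (snd (snd c)  p) = Decide v \<Longrightarrow> step n pr inp p c = c"
  by (cases c) auto

lemma step_inv:
  "pr p (inp p) (snd (snd c) p) = Invoke oper \<Longrightarrow>
   \<exists>r. snd (snd (step n pr inp p c)) p = snd (snd c) p @ [r]"
  by (cases c) (auto split: prod.split)

lemma len_mono_step:
  "length (snd (snd (run n pr q0 inp s t)) p) \<le> length (snd (snd (run n pr q0 inp s (Suc t))) p)"
proof (cases "s t = p")
  case False then show ?thesis by (simp add: step_other)
next
  case True
  show ?thesis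
  proof (cases "pr p (inp p) (snd (snd (run n pr q0 inp s t)) p)")
    case (Invoke oper)
    then obtain r where "snd (snd (step n pr inp p (run n pr q0 inp s t))) p
       = snd (snd (run n pr q0 inp s t)) p @ [r]" using step_inv by blast
    then show ?thesis using True by simp
  next
    case (Decide v) then show ?thesis using True by (simp add: step_dec)
  qed
qed

lemma stepped:
  "0 < length (snd (snd (run n pr q0 inp s t)) p) \<Longrightarrow> \<exists>t'<t. s t' = p"
proof (induction t)
  case 0 then show ?case by simp
next
  case (Suc t)
  show ?case
  proof (cases "s t = p")
    case True then show ?thesis by auto
  next
    case False
    then have "snd (snd (run n pr q0 inp s (Suc t))) p = snd (snd (run n pr q0 inp s t)) p"
      by (simp add: step_other)
    with Suc show ?thesis by (metis less_Suc_eq)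
  qed
qed

lemma termination_gen:
  assumes L: "\<And>x h. L \<le> length h \<Longrightarrow> \<exists>v. pr p x h = Decide v"
    and inf: "\<forall>m. \<exists>t\<ge>m. s t = p"
  shows "\<exists>t v. decided n pr q0 inp s t p v"
proof -
  define H where "H t = snd (snd (run n pr q0 inp s t)) p" for t
  define Pr where "Pr t N \<longleftrightarrow> (\<exists>v. pr p (inp p) (H t) = Decide v) \<or> N \<le> length (H t)" for t N
  have p1: "Pr (Suc t) N" if "Pr t N" for t N
  proof (cases "\<exists>v. pr p (inp p) (H t) = Decide v")
    case True
    then obtain v where v: "pr p (inp p) (H t) = Decide v" by blast
    have "H (Suc t) = H t"
    proof (cases "s t = p")
      case True then show ?thesis using v by (simp add: H_def step_dec)
    next
      case False then show ?thesis by (simp add: H_def step_other)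
    qed
    then show ?thesis using v Pr_def by auto
  next
    case False
    then have "N \<le> length (H t)" using that Pr_def by auto
    also have "\<dots> \<le> length (H (Suc t))" unfolding H_def by (rule len_mono_step)
    finally show ?thesis by (simp add: Pr_def)
  qed
  have pp: "Pr t' N" if "Pr t N" "t \<le> t'" for t t' N
    using that(2,1) by (induction t' rule: dec_induct) (auto intro: p1)
  have grow: "\<exists>t. Pr t N" for N
  proof (induction N)
    case 0 then show ?case by (auto simp: Pr_def)
  next
    case (Suc N)
    then obtain t where t: "Pr t N" by blast
    obtain t' where t': "t' \<ge> t" "s t' = p" using inf by blast
    have "Pr t' N" using pp t t' by blast
    show ?case
    proof (cases "\<exists>v. pr p (inp p) (H t') = Decide v")
      case True then show ?thesis by (auto simp: Pr_def)
    next
      case False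
      then obtain oper where o: "pr p (inp p) (H t') = Invoke oper"
        by (cases "pr p (inp p) (H t')") auto
      then obtain r where "H (Suc t') = H t' @ [r]"
        using step_inv[of pr p inp "run n pr q0 inp s t'"] t' by (auto simp: H_def)
      then have "Pr (Suc t') (Suc N)" using \<open>Pr t' N\<close> False by (auto simp: Pr_def)
      then show ?thesis by blast
    qed
  qed
  obtain t where t: "Pr t L" using grow by blast
  obtain t2 where t2: "t2 \<ge> t" "s t2 = p" using inf by blast
  have "Pr (Suc t2) L" using pp t t2 by auto
  then obtain v where "pr p (inp p) (H (Suc t2)) = Decide v" using L by (auto simp: Pr_def)
  then have "decided n pr q0 inp s (Suc t2) p v"
    unfolding decided_def H_def using t2 by auto
  then show ?thesis by blast
qed


section \<open>The protocol\<close>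

locale proto =
  fixes n a :: nat and \<beta> :: "nat \<Rightarrow> nat" and \<alpha> :: "nat \<Rightarrow> nat \<Rightarrow> nat"
  assumes an: "a < n" and bpos: "0 < \<beta> a" and n2: "2 \<le> n"
  and spend: "\<And>p s. p < n \<Longrightarrow> s < n \<Longrightarrow> 0 < \<alpha> a p \<Longrightarrow> 0 < \<alpha> a s \<Longrightarrow>
      p \<noteq> a \<Longrightarrow> s \<noteq> a \<Longrightarrow> p \<noteq> s \<Longrightarrow> \<beta> a < \<alpha> a p + \<alpha> a s"
begin

definition PP where "PP = {p. p < n \<and> (p = a \<or> 0 < \<alpha> a p)}"
definition d where "d = (if a = 0 then 1 else (0::nat))"
definition m where "m p = min (\<alpha> a p) (\<beta> a)"
definition tokop :: "nat \<Rightarrow> 'v op" where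
  "tokop p = (if p = a then Transfer d (\<beta> a) else TransferFrom a p (m p))"
definition qw :: "nat \<Rightarrow> tstate" where
  "qw p = (if p = a then (\<beta>(a := 0, d := \<beta> d + \<beta> a), \<alpha>)
           else (\<beta>(a := \<beta> a - m p, p := \<beta> p + m p), \<alpha>(a := (\<alpha> a)(p := \<alpha> a p - m p))))"
definition cand :: "'v resp list \<Rightarrow> nat \<Rightarrow> bool" where
  "cand h j \<longleftrightarrow> j < n \<and> j \<noteq> a \<and> h ! (2+j) \<noteq> RNat (\<alpha> a j)"
definition winner :: "'v resp list \<Rightarrow> nat" where
  "winner h = (if \<exists>j. cand h j then (LEAST j. cand h j) else a)"
definition prog :: "'v prog" where
 "prog p x h = (if length h = 0 then Invoke (RegWrite p (Some x))
    else if length h = 1 then Invoke (tokop p)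
    else if h ! 1 = RBool True then Decide x
    else if length h < 2 + n then Invoke (Allowance a (length h - 2))
    else if length h = 2 + n then Invoke (RegRead (winner h))
    else Decide (case h ! (2+n) of RVal (Some v) \<Rightarrow> v | _ \<Rightarrow> x))"

lemma d_ne: "d \<noteq> a" and d_lt: "d < n"
  using n2 by (auto simp: d_def)

lemma m_pos: "p \<in> PP \<Longrightarrow> p \<noteq> a \<Longrightarrow> 0 < m p"
  using bpos by (auto simp: PP_def m_def)

lemma m_le: "m p \<le> \<alpha> a p" "m p \<le> \<beta> a"
  by (auto simp: m_def)

lemma msum: "p \<in> PP \<Longrightarrow> w \<in> PP \<Longrightarrow> p \<noteq> a \<Longrightarrow> w \<noteq> a \<Longrightarrow> p \<noteq> w \<Longrightarrow> \<beta> a < m p + m w"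
  using spend[of p w] bpos by (auto simp: PP_def m_def)

lemma tok_succ:
  assumes "p \<in> PP"
  shows "apply_op n p (tokop p) ((\<beta>,\<alpha>), R) = ((qw p, R), RBool True)"
proof (cases "p = a")
  case True then show ?thesis using d_ne d_lt by (simp add: tokop_def qw_def Let_def)
next
  case False then show ?thesis using assms an m_le
    by (simp add: tokop_def qw_def Let_def PP_def)
qed

lemma tok_fail:
  assumes "w \<in> PP" "p \<in> PP" "p \<noteq> w"
  shows "apply_op n p (tokop p) (qw w, R) = ((qw w, R), RBool False)"
proof (cases "p = a")
  case True
  then have "w \<noteq> a" using assms by auto
  then show ?thesis using True m_pos[OF assms(1)] d_ne bpos m_le(2)[of w]
    by (auto simp: tokop_def qw_def Let_def)
next
  case False
  show ?thesis
  proof (cases "w = a")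
    case True then show ?thesis using False m_pos[OF assms(2)] d_ne
      by (simp add: tokop_def qw_def Let_def)
  next
    case wa: False
    have "\<beta> a < m p + m w" using msum assms False wa by auto
    then show ?thesis using False wa assms(3) m_le(2)[of w]
      by (auto simp: tokop_def qw_def Let_def)
  qed
qed

lemma allw_qw: "w \<in> PP \<Longrightarrow> j \<noteq> a \<Longrightarrow> (allw (qw w) a j = \<alpha> a j) \<longleftrightarrow> (w = a \<or> j \<noteq> w)"
  using m_pos[of w] m_le[of w] by (auto simp: qw_def allw_def)

lemma winner_eq:
  assumes "w \<in> PP" "\<forall>j<n. h ! (2+j) = RNat (allw (qw w) a j)"
  shows "winner h = w"
proof -
  have c: "cand h j \<longleftrightarrow> (w \<noteq> a \<and> j = w)" for j
    using assms allw_qw[OF assms(1), of j] by (auto simp: cand_def PP_def)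
  show ?thesis
  proof (cases "w = a")
    case True then show ?thesis using c by (simp add: winner_def)
  next
    case False
    then have "cand h = (\<lambda>j. j = w)" using c by auto
    then show ?thesis by (auto simp: winner_def intro: Least_equality)
  qed
qed

lemma apply_allow: "j < n \<Longrightarrow> apply_op n p (Allowance a j) (q, R) = ((q, R), RNat (allw q a j))"
  using an by (cases q) (simp add: allw_def)

definition Inv :: "(nat \<Rightarrow> 'v) \<Rightarrow> 'v config \<Rightarrow> bool" where
 "Inv inp c \<longleftrightarrow> (case c of (q, R, h) \<Rightarrow>
   (\<forall>p\<in>PP. 1 \<le> length (h p) \<longrightarrow> R p = Some (inp p)) \<and>
   ((q = (\<beta>,\<alpha>) \<and> (\<forall>p\<in>PP. length (h p) \<le> 1)) \<or>
    (\<exists>w\<in>PP. q = qw w \<and> 2 \<le> length (h w) \<and> h w ! 1 = RBool True \<and>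
       (\<forall>p\<in>PP. p \<noteq> w \<longrightarrow> 2 \<le> length (h p) \<longrightarrow> h p ! 1 = RBool False \<and>
          (\<forall>j<n. 2+j < length (h p) \<longrightarrow> h p ! (2+j) = RNat (allw (qw w) a j)) \<and>
          (2+n < length (h p) \<longrightarrow> h p ! (2+n) = RVal (Some (inp w)))))))"


lemma prog_long: "3 + n \<le> length h \<Longrightarrow> \<exists>v. prog p x h = Decide v"
  by (auto simp: prog_def)

lemma inv_step:
  assumes I: "Inv inp (q,R,h)" and pP: "p \<in> PP"
  shows "Inv inp (step n prog inp p (q,R,h))"
proof -
  from I have regs: "\<forall>p\<in>PP. 1 \<le> length (h p) \<longrightarrow> R p = Some (inp p)"
    and C: "(q = (\<beta>,\<alpha>) \<and> (\<forall>p\<in>PP. length (h p) \<le> 1)) \<or>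
    (\<exists>w\<in>PP. q = qw w \<and> 2 \<le> length (h w) \<and> h w ! 1 = RBool True \<and>
       (\<forall>p\<in>PP. p \<noteq> w \<longrightarrow> 2 \<le> length (h p) \<longrightarrow> h p ! 1 = RBool False \<and>
          (\<forall>j<n. 2+j < length (h p) \<longrightarrow> h p ! (2+j) = RNat (allw (qw w) a j)) \<and>
          (2+n < length (h p) \<longrightarrow> h p ! (2+n) = RVal (Some (inp w)))))"
    by (simp_all add: Inv_def)
  consider (l0) "length (h p) = 0" | (l1) "length (h p) = 1" | (l2) "2 \<le> length (h p)" by linarith
  then show ?thesis
  proof cases
    case l0
    have st: "step n prog inp p (q,R,h) = (q, R(p := Some (inp p)), h(p := [RAck]))"
      using l0 by (simp add: prog_def)
    from C show ?thesis
    proof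
      assume "q = (\<beta>,\<alpha>) \<and> (\<forall>p\<in>PP. length (h p) \<le> 1)"
      then show ?thesis unfolding st Inv_def using regs l0 by auto
    next
      assume "\<exists>w\<in>PP. q = qw w \<and> 2 \<le> length (h w) \<and> h w ! 1 = RBool True \<and>
       (\<forall>p\<in>PP. p \<noteq> w \<longrightarrow> 2 \<le> length (h p) \<longrightarrow> h p ! 1 = RBool False \<and>
          (\<forall>j<n. 2+j < length (h p) \<longrightarrow> h p ! (2+j) = RNat (allw (qw w) a j)) \<and>
          (2+n < length (h p) \<longrightarrow> h p ! (2+n) = RVal (Some (inp w))))"
      then obtain w where w: "w\<in>PP" "q = qw w" "2 \<le> length (h w)" "h w ! 1 = RBool True"
        and rest: "\<forall>p\<in>PP. p \<noteq> w \<longrightarrow> 2 \<le> length (h p) \<longrightarrow> h p ! 1 = RBool False \<and>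
          (\<forall>j<n. 2+j < length (h p) \<longrightarrow> h p ! (2+j) = RNat (allw (qw w) a j)) \<and>
          (2+n < length (h p) \<longrightarrow> h p ! (2+n) = RVal (Some (inp w)))" by blast
      have pw: "p \<noteq> w" using w l0 by auto
      show ?thesis unfolding st Inv_def using regs l0 w rest pw
        by (simp, intro disjI2 bexI[of _ w]) auto
    qed
  next
    case l1
    from C show ?thesis
    proof
      assume i: "q = (\<beta>,\<alpha>) \<and> (\<forall>p\<in>PP. length (h p) \<le> 1)"
      have st: "step n prog inp p (q,R,h) = (qw p, R, h(p := h p @ [RBool True]))"
        using l1 i by (simp add: prog_def tok_succ pP)
      show ?thesis unfolding st Inv_def using regs l1 i pP
        by (simp, intro disjI2 bexI[of _ p]) (auto simp: nth_append)
    next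
      assume "\<exists>w\<in>PP. q = qw w \<and> 2 \<le> length (h w) \<and> h w ! 1 = RBool True \<and>
       (\<forall>p\<in>PP. p \<noteq> w \<longrightarrow> 2 \<le> length (h p) \<longrightarrow> h p ! 1 = RBool False \<and>
          (\<forall>j<n. 2+j < length (h p) \<longrightarrow> h p ! (2+j) = RNat (allw (qw w) a j)) \<and>
          (2+n < length (h p) \<longrightarrow> h p ! (2+n) = RVal (Some (inp w))))"
      then obtain w where w: "w\<in>PP" "q = qw w" "2 \<le> length (h w)" "h w ! 1 = RBool True"
        and rest: "\<forall>p\<in>PP. p \<noteq> w \<longrightarrow> 2 \<le> length (h p) \<longrightarrow> h p ! 1 = RBool False \<and>
          (\<forall>j<n. 2+j < length (h p) \<longrightarrow> h p ! (2+j) = RNat (allw (qw w) a j)) \<and>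
          (2+n < length (h p) \<longrightarrow> h p ! (2+n) = RVal (Some (inp w)))" by blast
      have pw: "p \<noteq> w" using w l1 by auto
      have st: "step n prog inp p (q,R,h) = (q, R, h(p := h p @ [RBool False]))"
        using l1 w pw by (simp add: prog_def tok_fail pP)
      show ?thesis unfolding st Inv_def using regs l1 w rest pw
        by (simp, intro disjI2 bexI[of _ w]) (auto simp: nth_append)
    qed
  next
    case l2
    with C obtain w where w: "w\<in>PP" "q = qw w" "2 \<le> length (h w)" "h w ! 1 = RBool True"
        and rest: "\<forall>p\<in>PP. p \<noteq> w \<longrightarrow> 2 \<le> length (h p) \<longrightarrow> h p ! 1 = RBool False \<and>
          (\<forall>j<n. 2+j < length (h p) \<longrightarrow> h p ! (2+j) = RNat (allw (qw w) a j)) \<and>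
          (2+n < length (h p) \<longrightarrow> h p ! (2+n) = RVal (Some (inp w)))"
      using pP by fastforce
    have ne: "h p \<noteq> []" "length (h p) \<noteq> 0" "length (h p) \<noteq> Suc 0" using l2 by auto
    show ?thesis
    proof (cases "h p ! 1 = RBool True")
      case True
      have "step n prog inp p (q,R,h) = (q,R,h)" using l2 True by (auto simp: prog_def)
      then show ?thesis using I by simp
    next
      case False
      have pw: "p \<noteq> w" using w False by auto
      have rp: "h p ! 1 = RBool False"
        "\<forall>j<n. 2+j < length (h p) \<longrightarrow> h p ! (2+j) = RNat (allw (qw w) a j)"
        "2+n < length (h p) \<longrightarrow> h p ! (2+n) = RVal (Some (inp w))"
        using rest pP pw l2 by auto
      consider (lt) "length (h p) < 2 + n" | (eq) "length (h p) = 2 + n" | (gt) "2 + n < length (h p)"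
        by linarith
      then show ?thesis
      proof cases
        case lt
        have jn: "length (h p) - 2 < n" using lt l2 by linarith
        have st: "step n prog inp p (q,R,h) =
            (q, R, h(p := h p @ [RNat (allw (qw w) a (length (h p) - 2))]))"
          using l2 lt False w ne apply_allow[OF jn, of p "qw w" R] by (simp add: prog_def)
        have np: "\<forall>j<n. 2+j < Suc (length (h p)) \<longrightarrow>
            (h p @ [RNat (allw (qw w) a (length (h p) - 2))]) ! (2+j) = RNat (allw (qw w) a j)"
        proof (intro allI impI)
          fix j assume j: "j < n" "2 + j < Suc (length (h p))"
          show "(h p @ [RNat (allw (qw w) a (length (h p) - 2))]) ! (2+j) = RNat (allw (qw w) a j)"
          proof (cases "2 + j < length (h p)")
            case True then show ?thesis using rp j by (simp add: nth_append)
          next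
            case False then have e: "2 + j = length (h p)" using j by simp
            then have "length (h p) - 2 = j" by simp
            then show ?thesis using e by (simp add: nth_append)
          qed
        qed
        show ?thesis unfolding st Inv_def using regs l2 w rest pw rp lt np
          by (simp, intro disjI2 bexI[of _ w]) (auto simp: nth_append)
      next
        case eq
        have win: "winner (h p) = w" using winner_eq[OF w(1)] rp eq by auto
        have Rw: "R w = Some (inp w)" using regs w by auto
        have st: "step n prog inp p (q,R,h) = (q, R, h(p := h p @ [RVal (Some (inp w))]))"
          using l2 eq False win Rw ne by (simp add: prog_def)
        show ?thesis unfolding st Inv_def using regs l2 w rest pw rp eq
          by (simp, intro disjI2 bexI[of _ w]) (auto simp: nth_append)
      next
        case gt
        have "step n prog inp p (q,R,h) = (q,R,h)" using l2 gt False by (auto simp: prog_def)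
        then show ?thesis using I by simp
      qed
    qed
  qed
qed


lemma inv_run: "(\<forall>t. s t \<in> PP) \<Longrightarrow> Inv inp (run n prog (\<beta>,\<alpha>) inp s t)"
proof (induction t)
  case 0 then show ?case by (simp add: Inv_def)
next
  case (Suc t)
  obtain q R h where e: "run n prog (\<beta>,\<alpha>) inp s t = (q,R,h)" by (cases "run n prog (\<beta>,\<alpha>) inp s t") auto
  show ?case using inv_step[of inp q R h "s t"] Suc e by simp
qed

lemma dec_val:
  assumes I: "Inv inp (q,R,h)" and pP: "p \<in> PP" and D: "prog p (inp p) (h p) = Decide v"
  shows "\<exists>w\<in>PP. 2 \<le> length (h w) \<and> (\<forall>p'\<in>PP. \<forall>v'. prog p' (inp p') (h p') = Decide v' \<longrightarrow> v' = inp w)"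
proof -
  from I have C: "(q = (\<beta>,\<alpha>) \<and> (\<forall>p\<in>PP. length (h p) \<le> 1)) \<or>
    (\<exists>w\<in>PP. q = qw w \<and> 2 \<le> length (h w) \<and> h w ! 1 = RBool True \<and>
       (\<forall>p\<in>PP. p \<noteq> w \<longrightarrow> 2 \<le> length (h p) \<longrightarrow> h p ! 1 = RBool False \<and>
          (\<forall>j<n. 2+j < length (h p) \<longrightarrow> h p ! (2+j) = RNat (allw (qw w) a j)) \<and>
          (2+n < length (h p) \<longrightarrow> h p ! (2+n) = RVal (Some (inp w)))))"
    by (simp add: Inv_def)
  have short: "\<And>p' x. length (h p') \<le> 1 \<Longrightarrow> \<exists>oo. prog p' x (h p') = Invoke oo"
    by (auto simp: prog_def le_Suc_eq)
  have "\<not> (\<forall>p\<in>PP. length (h p) \<le> 1)" using short[of p "inp p"] pP D by auto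
  with C obtain w where w: "w\<in>PP" "2 \<le> length (h w)" "h w ! 1 = RBool True"
        and rest: "\<forall>p\<in>PP. p \<noteq> w \<longrightarrow> 2 \<le> length (h p) \<longrightarrow> h p ! 1 = RBool False \<and>
          (\<forall>j<n. 2+j < length (h p) \<longrightarrow> h p ! (2+j) = RNat (allw (qw w) a j)) \<and>
          (2+n < length (h p) \<longrightarrow> h p ! (2+n) = RVal (Some (inp w)))" by blast
  have "v' = inp w" if p': "p' \<in> PP" and D': "prog p' (inp p') (h p') = Decide v'" for p' v'
  proof (cases "p' = w")
    case True
    have "prog w (inp w) (h w) = Decide (inp w)" using w by (auto simp: prog_def)
    then show ?thesis using D' True by simp
  next
    case False
    have l: "2 \<le> length (h p')"
    proof (rule ccontr)
      assume "\<not> 2 \<le> length (h p')"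
      then show False using short[of p' "inp p'"] D' by auto
    qed
    then have r: "h p' ! 1 = RBool False" "2+n < length (h p') \<longrightarrow> h p' ! (2+n) = RVal (Some (inp w))"
      using rest p' False by auto
    have "2 + n < length (h p')"
    proof (rule ccontr)
      assume "\<not> 2 + n < length (h p')"
      then show False using D' l r by (auto simp: prog_def split: if_splits)
    qed
    then have "prog p' (inp p') (h p') = Decide (inp w)" using l r by (auto simp: prog_def)
    then show ?thesis using D' by simp
  qed
  then show ?thesis using w by blast
qed

lemma impl: "consensus_impl n (\<beta>,\<alpha>) PP prog"
  unfolding consensus_impl_def
proof (intro allI impI conjI)
  fix inp :: "nat \<Rightarrow> 'v" and s :: "nat \<Rightarrow> nat" assume sP: "\<forall>t. s t \<in> PP"
  show "\<forall>p\<in>PP. (\<forall>m. \<exists>t\<ge>m. s t = p) \<longrightarrow> (\<exists>t v. decided n prog (\<beta>,\<alpha>) inp s t p v)"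
  proof (intro ballI impI)
    fix p assume inf: "p \<in> PP" "\<forall>m. \<exists>t\<ge>m. s t = p"
    show "\<exists>t v. decided n prog (\<beta>,\<alpha>) inp s t p v"
    proof (rule termination_gen[where L="3+n"])
      show "\<And>x h. 3 + n \<le> length h \<Longrightarrow> \<exists>v. prog p x h = Decide v" by (rule prog_long)
      show "\<forall>m. \<exists>t\<ge>m. s t = p" by (rule inf(2))
    qed
  qed
  have key: "\<exists>w\<in>PP. (\<exists>t'<t. s t' = w) \<and> (\<forall>p'\<in>PP. \<forall>v'. decided n prog (\<beta>,\<alpha>) inp s t p' v' \<longrightarrow> v' = inp w)"
    if "decided n prog (\<beta>,\<alpha>) inp s t p v" for t p v
  proof -
    obtain q R h where e: "run n prog (\<beta>,\<alpha>) inp s t = (q,R,h)" by (cases "run n prog (\<beta>,\<alpha>) inp s t") auto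
    have pP: "p \<in> PP" using that sP by (auto simp: decided_def)
    have I: "Inv inp (q,R,h)" using inv_run[OF sP, of inp t] e by simp
    have D: "prog p (inp p) (h p) = Decide v" using that e by (simp add: decided_def)
    obtain w where w: "w \<in> PP" "2 \<le> length (h w)"
      and all: "\<forall>p'\<in>PP. \<forall>v'. prog p' (inp p') (h p') = Decide v' \<longrightarrow> v' = inp w"
      using dec_val[OF I pP D] by blast
    have "\<exists>t'<t. s t' = w" using stepped[of n prog "(\<beta>,\<alpha>)" inp s t w] w e by force
    moreover have "\<forall>p'\<in>PP. \<forall>v'. decided n prog (\<beta>,\<alpha>) inp s t p' v' \<longrightarrow> v' = inp w"
      using all e by (auto simp: decided_def)
    ultimately show ?thesis using w by blast
  qed
  {
    fix t p v assume d: "decided n prog (\<beta>,\<alpha>) inp s t p v"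
    have pP: "p \<in> PP" using d sP by (auto simp: decided_def)
    show "\<exists>p'\<in>PP. (\<exists>t'<t. s t' = p') \<and> v = inp p'" using key[OF d] d pP by blast
  }
  {
    fix t p1 p2 v1 v2 assume d: "decided n prog (\<beta>,\<alpha>) inp s t p1 v1 \<and> decided n prog (\<beta>,\<alpha>) inp s t p2 v2"
    have pP: "p1 \<in> PP" "p2 \<in> PP" using d sP by (auto simp: decided_def)
    show "v1 = v2" using key[of t p1 v1] d pP by auto
  }
qed

end

lemma impl_one:
  assumes "card P = 1"
  shows "consensus_impl n q P (\<lambda>p x h. Decide x)"
proof -
  obtain x where P: "P = {x}" using assms card_1_singletonE by blast
  have H: "\<exists>t. \<exists>t'<t. s t' = p" if "\<forall>m. \<exists>t\<ge>m. s t = p" for s :: "nat \<Rightarrow> nat" and p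
    using that by (metis lessI)
  show ?thesis unfolding consensus_impl_def decided_def P
    by (auto dest!: H)
qed

lemma main_one:
  assumes "1 \<le> k" "k \<le> n" "q \<in> S n k"
  shows "\<exists>P (pr :: 'v prog). P \<subseteq> {..<n} \<and> card P = k \<and> consensus_impl n q P pr"
proof -
  obtain a where a: "a < n" "card (sigma n q a) = k" "UT n a q" using assms(3) by (auto simp: S_def)
  obtain \<beta> \<alpha> where q: "q = (\<beta>, \<alpha>)" by (cases q)
  have bq: "bal q = \<beta>" "allw q = \<alpha>" using q by (auto simp: bal_def allw_def)
  have bpos: "0 < \<beta> a" using a(3) bq by (simp add: UT_def)
  have sig: "sigma n q a = {p. p < n \<and> (p = a \<or> 0 < \<alpha> a p)}" using bpos bq by (simp add: sigma_def)
  have sub: "sigma n q a \<subseteq> {..<n}" using sig by auto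
  have fin: "finite (sigma n q a)" using sub finite_subset by blast
  show ?thesis
  proof (cases "k = 1")
    case True
    then show ?thesis using impl_one[of "sigma n q a" n q] sub a(2) by blast
  next
    case False
    have n2: "2 \<le> n"
    proof -
      have "card (sigma n q a) \<le> card {..<n}" using sub by (intro card_mono) auto
      then show ?thesis using a(2) False assms(1) by simp
    qed
    have spend: "\<beta> a < \<alpha> a p + \<alpha> a s"
      if "p < n" "s < n" "0 < \<alpha> a p" "0 < \<alpha> a s" "p \<noteq> a" "s \<noteq> a" "p \<noteq> s" for p s
    proof -
      have ps: "p \<in> sigma n q a - {a}" "s \<in> sigma n q a - {a}" using that sig by auto
      have "\<not> card (sigma n q a) \<le> 2"
      proof -
        have "{a, p, s} \<subseteq> sigma n q a" using ps a(1) sig by auto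
        then have "card {a, p, s} \<le> card (sigma n q a)" using fin by (intro card_mono) auto
        then show ?thesis using that by auto
      qed
      then show ?thesis using a(3) ps that bq unfolding UT_def by blast
    qed
    interpret proto n a \<beta> \<alpha> using a(1) bpos n2 spend by unfold_locales auto
    have "PP = sigma n q a" using sig by (simp add: PP_def)
    moreover have "consensus_impl n (\<beta>,\<alpha>) PP (prog :: 'v prog)" by (rule impl)
    ultimately show ?thesis using sub a(2) q by auto
  qed
qed

theorem theorem2:
  fixes n k :: nat
  assumes "1 \<le> k" and "k \<le> n"
  shows "(\<forall>q \<in> S n k. \<exists>P (pr :: 'v prog).
            P \<subseteq> {..<n} \<and> card P = k \<and> consensus_impl n q P pr)
         \<and> CN_ge TYPE('v) n (S n k) k"
  using main_one[OF assms] by (auto simp: CN_ge_def consensus_implementable_def)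

end
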